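(* Let $A$ be a $p$-torsion free ring with a ring endomorphism $\phi$ satisfying $\phi(a)\equiv a^p\pmod{pA}$ for all $a\in A$. For every $a\in A$ and $n\ge1$: (i) $[a]=s_\phi(a)+Vs_\phi(\Delta_1(a))+\cdots+V^{n-1}s_\phi(\Delta_{n-1}(a))+V^n[\Delta_n(a)]$ in $W_{n+1}(A)$; (ii) $a^{p^n}=\sum_{s=0}^n p^s\phi^{n-s}(\Delta_s(a))$; (iii) $p^{n-1}\Delta_n(a)=\Delta_1(a^{p^{n-1}})$; (iv) for $n\ge2$, $\Delta_n(a)\equiv a^{p^n-p}\Delta_1(a)+a^{p^n-2p}\Delta_1(a)^p\pmod p$ if $p=2$, and $\Delta_n(a)\equiv a^{p^n-p}\Delta_1(a)\pmod p$ if $p$ is odd.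
   Context: $W(A)$, $W_n(A)$: $p$-typical Witt vectors (of length $n$), $[a]$ Teichmüller lift, $V$ Verschiebung, ghost components $\varphi_m(a_0,a_1,\dots)=\sum_{i=0}^mp^ia_i^{p^{m-i}}$. $s_\phi:A\to W(A)$ is the unique ring map with $\varphi_m(s_\phi(a))=\phi^m(a)$ for all $m$ (also composed with restriction to $W_n(A)$). Define $\Delta_{W_n}:W_n(A)\to W_{n-1}(A)$ by $V\Delta_{W_n}(\alpha)=\alpha-s_\phi(a_0)$ for $\alpha=(a_0,\dots,a_{n-1})$. Set $\Delta_0(a)=a$ and $\Delta_s(a)=\Delta_{W_2}\circ\cdots\circ\Delta_{W_{s+1}}([a])\in A$ for $s\ge1$; in particular $\Delta_1(a)=(a^p-\phi(a))/p$. *)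

theory Defs
  imports "HOL-Computational_Algebra.Primes"
begin

text \<open>p-typical Witt vectors over a commutative ring 'a, represented as sequences
  nat => 'a; a Witt vector of length n is a sequence whose components of index
  >= n vanish.  Throughout, the ring is assumed p-torsion free (hypothesis of the
  theorem), so the ghost map is injective and the Witt ring operations on W_n(A)
  are characterised as the unique vectors with prescribed ghost components.\<close>

definition ghost :: "nat \<Rightarrow> nat \<Rightarrow> (nat \<Rightarrow> 'a::comm_ring_1) \<Rightarrow> 'a" where
  "ghost p m x = (\<Sum>i\<le>m. of_nat p ^ i * x i ^ (p ^ (m - i)))"

definition wtrunc :: "nat \<Rightarrow> (nat \<Rightarrow> 'a::zero) \<Rightarrow> bool" where
  "wtrunc n x \<longleftrightarrow> (\<forall>i\<ge>n. x i = 0)"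

definition witt_add :: "nat \<Rightarrow> nat \<Rightarrow> (nat \<Rightarrow> 'a::comm_ring_1) \<Rightarrow> (nat \<Rightarrow> 'a) \<Rightarrow> (nat \<Rightarrow> 'a)" where
  "witt_add p n x y = (THE z. wtrunc n z \<and> (\<forall>m<n. ghost p m z = ghost p m x + ghost p m y))"

definition witt_sub :: "nat \<Rightarrow> nat \<Rightarrow> (nat \<Rightarrow> 'a::comm_ring_1) \<Rightarrow> (nat \<Rightarrow> 'a) \<Rightarrow> (nat \<Rightarrow> 'a)" where
  "witt_sub p n x y = (THE z. wtrunc n z \<and> (\<forall>m<n. ghost p m z = ghost p m x - ghost p m y))"

definition witt_sum :: "nat \<Rightarrow> nat \<Rightarrow> (nat \<Rightarrow> 'a::comm_ring_1) list \<Rightarrow> (nat \<Rightarrow> 'a)" where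
  "witt_sum p n xs = foldr (witt_add p n) xs (\<lambda>_. 0)"

definition teich :: "nat \<Rightarrow> 'a::zero \<Rightarrow> (nat \<Rightarrow> 'a)" where
  "teich n a = (\<lambda>i. if i = 0 \<and> 0 < n then a else 0)"

definition wV :: "(nat \<Rightarrow> 'a::zero) \<Rightarrow> (nat \<Rightarrow> 'a)" where
  "wV x = (\<lambda>i. if i = 0 then 0 else x (i - 1))"

definition s_phi :: "nat \<Rightarrow> ('a::comm_ring_1 \<Rightarrow> 'a) \<Rightarrow> nat \<Rightarrow> 'a \<Rightarrow> (nat \<Rightarrow> 'a)" where
  "s_phi p \<phi> n a = (THE z. wtrunc n z \<and> (\<forall>m<n. ghost p m z = (\<phi> ^^ m) a))"

definition DeltaW :: "nat \<Rightarrow> ('a::comm_ring_1 \<Rightarrow> 'a) \<Rightarrow> nat \<Rightarrow> (nat \<Rightarrow> 'a) \<Rightarrow> (nat \<Rightarrow> 'a)" where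
  "DeltaW p \<phi> n \<alpha> = (THE \<beta>. wtrunc (n - 1) \<beta> \<and> wV \<beta> = witt_sub p n \<alpha> (s_phi p \<phi> n (\<alpha> 0)))"

primrec delta_iter :: "nat \<Rightarrow> ('a::comm_ring_1 \<Rightarrow> 'a) \<Rightarrow> nat \<Rightarrow> nat \<Rightarrow> (nat \<Rightarrow> 'a) \<Rightarrow> (nat \<Rightarrow> 'a)" where
  "delta_iter p \<phi> 0 n \<alpha> = \<alpha>"
| "delta_iter p \<phi> (Suc k) n \<alpha> = delta_iter p \<phi> k (n - 1) (DeltaW p \<phi> n \<alpha>)"

definition Delta :: "nat \<Rightarrow> ('a::comm_ring_1 \<Rightarrow> 'a) \<Rightarrow> nat \<Rightarrow> 'a \<Rightarrow> 'a" where
  "Delta p \<phi> s a = delta_iter p \<phi> s (s + 1) (teich (s + 1) a) 0"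

end

theory Submission
  imports Defs
begin

locale frob =
  fixes p :: nat and \<phi> :: "'a::comm_ring_1 \<Rightarrow> 'a"
  assumes prm: "prime p"
    and tf: "\<forall>x::'a. of_nat p * x = 0 \<longrightarrow> x = 0"
    and padd: "\<forall>x y. \<phi> (x + y) = \<phi> x + \<phi> y"
    and pmult: "\<forall>x y. \<phi> (x * y) = \<phi> x * \<phi> y"
    and pone: "\<phi> 1 = 1"
    and lift: "\<forall>x. \<exists>y. \<phi> x = x ^ p + of_nat p * y"
begin

abbreviation "P \<equiv> (of_nat p :: 'a)"

lemma p_pos: "p > 0" using prm prime_gt_0_nat by blast
lemma p_ge2: "p \<ge> 2" using prm prime_ge_2_nat by blast

lemma phi_add: "\<phi> (x + y) = \<phi> x + \<phi> y" using padd by blast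
lemma phi_mult: "\<phi> (x * y) = \<phi> x * \<phi> y" using pmult by blast
lemma phi_zero: "\<phi> 0 = 0" using phi_add[of 0 0] by simp
lemma phi_diff: "\<phi> (x - y) = \<phi> x - \<phi> y"
  using phi_add[of "x - y" y] by (simp add: algebra_simps)
lemma phi_sum: "\<phi> (sum f A) = (\<Sum>i\<in>A. \<phi> (f i))"
  by (induction A rule: infinite_finite_induct) (auto simp: phi_zero phi_add)
lemma phi_nat: "\<phi> (of_nat k) = of_nat k"
  by (induction k) (auto simp: phi_zero phi_add pone)
lemma phi_pow: "\<phi> (x ^ k) = \<phi> x ^ k"
  by (induction k) (auto simp: pone phi_mult)

lemma phin_add: "(\<phi> ^^ j) (x + y) = (\<phi> ^^ j) x + (\<phi> ^^ j) y"
  by (induction j) (auto simp: phi_add)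
lemma phin_zero: "(\<phi> ^^ j) 0 = 0"
  by (induction j) (auto simp: phi_zero)
lemma phin_sum: "(\<phi> ^^ j) (sum f A) = (\<Sum>i\<in>A. (\<phi> ^^ j) (f i))"
  by (induction A rule: infinite_finite_induct) (auto simp: phin_zero phin_add)
lemma phin_Pmult: "(\<phi> ^^ j) (P ^ s * x) = P ^ s * (\<phi> ^^ j) x"
  by (induction j) (auto simp: phi_mult phi_pow phi_nat)

lemma tf_pow: "P ^ m * x = 0 \<Longrightarrow> x = 0"
proof (induction m arbitrary: x)
  case (Suc m) then show ?case using tf by (metis mult.assoc power_Suc2)
qed simp

lemma cancel: "P ^ m * x = P ^ m * y \<Longrightarrow> x = y"
  using tf_pow[of m "x - y"] by (simp add: algebra_simps)

lemma cancel1: "P * x = P * y \<Longrightarrow> x = y"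
  using cancel[of 1] by simp

lemma pow_cong: "t dvd (x - y) \<Longrightarrow> t dvd (x ^ m - y ^ m :: 'a)"
  using power_diff_sumr2[of x m y] by (metis dvd_mult2)

lemma pow_p_cong:
  assumes "j \<ge> 1" "P ^ j dvd (x - y)"
  shows "P ^ (Suc j) dvd (x ^ p - y ^ p)"
proof -
  have Y: "(\<Sum>i<p. y^(p - Suc i) * y^i) = (\<Sum>i<p. y^(p - 1))"
    by (rule sum.cong) (auto simp: power_add[symmetric])
  have S: "(\<Sum>i<p. y^(p - Suc i) * x^i) - P * y ^ (p - 1)
      = (\<Sum>i<p. y^(p - Suc i) * (x^i - y ^ i))"
    using Y by (simp add: sum_subtractf algebra_simps)
  have "P ^ j dvd (\<Sum>i<p. y^(p - Suc i) * (x^i - y ^ i))"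
    by (intro dvd_sum dvd_mult pow_cong assms(2))
  with S have h: "P ^ j dvd (\<Sum>i<p. y^(p - Suc i) * x^i) - P * y ^ (p - 1)" by simp
  moreover have "P dvd P ^ j" using assms(1) by (simp add: dvd_power)
  ultimately have "P dvd (\<Sum>i<p. y^(p - Suc i) * x^i) - P * y ^ (p - 1)"
    using dvd_trans by blast
  then have "P dvd ((\<Sum>i<p. y^(p - Suc i) * x^i) - P * y ^ (p - 1)) + P * y ^ (p - 1)"
    by (intro dvd_add) auto
  then have "P dvd (\<Sum>i<p. y^(p - Suc i) * x^i)" by simp
  then have "P^j * P dvd (x - y) * (\<Sum>i<p. y^(p - Suc i) * x^i)"
    using assms(2) mult_dvd_mono by blast
  then show ?thesis using power_diff_sumr2[of x p y] by (metis power_Suc2)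
qed

lemma pow_iter_cong:
  assumes "P dvd (x - y)"
  shows "P ^ (Suc k) dvd (x ^ (p ^ k) - y ^ (p ^ k))"
proof (induction k)
  case 0 then show ?case using assms by simp
next
  case (Suc k)
  have "P ^ Suc (Suc k) dvd (x ^ (p ^ k)) ^ p - (y ^ (p ^ k)) ^ p"
    by (rule pow_p_cong) (use Suc in auto)
  then show ?case by (simp add: power_mult[symmetric] mult.commute)
qed

lemma frob_dvd: "P dvd (x ^ p - \<phi> x)"
proof -
  obtain y where "\<phi> x = x ^ p + P * y" using lift by blast
  then show ?thesis by (simp add: dvd_def) (metis minus_mult_right)
qed

lemma phi_Ppow: "\<phi> (P ^ i) = P ^ i" by (simp add: phi_pow phi_nat)

lemma ghost_Suc: "ghost p (Suc m) x = (\<Sum>i\<le>m. P ^ i * x i ^ (p ^ (Suc m - i))) + P ^ Suc m * x (Suc m)"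
  unfolding ghost_def by (simp add: Suc_diff_le)

lemma phi_ghost: "\<phi> (ghost p m x) = (\<Sum>i\<le>m. P ^ i * \<phi> (x i) ^ (p ^ (m - i)))"
  unfolding ghost_def by (simp add: phi_sum phi_mult phi_Ppow phi_pow phi_nat)

lemma dwork_fwd: "P ^ (Suc m) dvd (ghost p (Suc m) x - \<phi> (ghost p m x))"
proof -
  have eq: "ghost p (Suc m) x - \<phi> (ghost p m x) =
     (\<Sum>i\<le>m. P ^ i * ((x i ^ p) ^ (p ^ (m - i)) - \<phi> (x i) ^ (p ^ (m - i)))) + P ^ Suc m * x (Suc m)"
  proof -
    have "\<And>i. i \<le> m \<Longrightarrow> x i ^ (p ^ (Suc m - i)) = (x i ^ p) ^ (p ^ (m - i))"
      by (simp add: Suc_diff_le power_mult[symmetric] mult.commute)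
    then have "(\<Sum>i\<le>m. P ^ i * x i ^ (p ^ (Suc m - i))) = (\<Sum>i\<le>m. P ^ i * (x i ^ p) ^ (p ^ (m - i)))"
      by (intro sum.cong) auto
    then show ?thesis unfolding ghost_Suc phi_ghost
      by (simp add: sum_subtractf algebra_simps)
  qed
  have "P ^ (Suc m) dvd P ^ i * ((x i ^ p) ^ (p ^ (m - i)) - \<phi> (x i) ^ (p ^ (m - i)))" if "i \<le> m" for i
  proof -
    have "P ^ i * P ^ Suc (m - i) dvd P ^ i * ((x i ^ p) ^ (p ^ (m - i)) - \<phi> (x i) ^ (p ^ (m - i)))"
      by (intro mult_dvd_mono dvd_refl pow_iter_cong frob_dvd)
    moreover have "P ^ i * P ^ Suc (m - i) = P ^ Suc m"
    proof -
      have "i + Suc (m - i) = Suc m" using that by simp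
      then show ?thesis by (metis power_add)
    qed
    ultimately show ?thesis by simp
  qed
  then show ?thesis unfolding eq by (intro dvd_add dvd_sum) auto
qed

lemma ghost_local: "(\<And>i. i \<le> m \<Longrightarrow> x i = y i) \<Longrightarrow> ghost p m x = ghost p m y"
  unfolding ghost_def by (intro sum.cong) auto

lemma ghost_0: "ghost p 0 x = x 0" by (simp add: ghost_def)

lemma ghost_split: "ghost p m x = (\<Sum>i<m. P ^ i * x i ^ (p ^ (m - i))) + P ^ m * x m"
  unfolding ghost_def by (simp add: lessThan_Suc_atMost[symmetric])

lemma ghost_inj:
  fixes x y :: "nat \<Rightarrow> 'a"
  assumes "wtrunc N x" "wtrunc N y" "\<forall>m<N. ghost p m x = ghost p m y"
  shows "x = y"
proof -
  have "j < N \<longrightarrow> x j = y j" for j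
  proof (induction j rule: less_induct)
    case (less j)
    show ?case
    proof
      assume j: "j < N"
      have "(\<Sum>i<j. P ^ i * x i ^ (p ^ (j - i))) = (\<Sum>i<j. P ^ i * y i ^ (p ^ (j - i)))"
        using less j by (intro sum.cong) auto
      moreover have "ghost p j x = ghost p j y" using assms(3) j by blast
      ultimately have "P ^ j * x j = P ^ j * y j" unfolding ghost_split by simp
      then show "x j = y j" by (rule cancel)
    qed
  qed
  then show ?thesis using assms(1,2) unfolding wtrunc_def
    by (metis ext not_less)
qed

definition dw :: "nat \<Rightarrow> (nat \<Rightarrow> 'a) \<Rightarrow> bool" where
  "dw N w \<longleftrightarrow> (\<forall>m. Suc m < N \<longrightarrow> P ^ Suc m dvd (w (Suc m) - \<phi> (w m)))"

lemma dwork_bwd: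
  assumes "dw N w"
  shows "\<exists>x. wtrunc N x \<and> (\<forall>m<N. ghost p m x = w m)"
  using assms
proof (induction N)
  case 0 then show ?case by (intro exI[of _ "\<lambda>_. 0"]) (simp add: wtrunc_def)
next
  case (Suc N)
  have "dw N w" using Suc.prems unfolding dw_def by auto
  then obtain x where x: "wtrunc N x" "\<forall>m<N. ghost p m x = w m" using Suc.IH by blast
  have "P ^ N dvd (w N - ghost p N x)"
  proof (cases N)
    case 0 then show ?thesis by simp
  next
    case (Suc M)
    have eq: "w N - ghost p N x = (w (Suc M) - \<phi> (w M)) - (ghost p (Suc M) x - \<phi> (ghost p M x))"
      using x(2) Suc by simp
    have A: "P ^ N dvd (w (Suc M) - \<phi> (w M))"
      using Suc.prems \<open>N = Suc M\<close> unfolding dw_def by auto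
    have B: "P ^ N dvd (ghost p (Suc M) x - \<phi> (ghost p M x))"
      using dwork_fwd[of M x] Suc by simp
    from dvd_diff[OF A B] show ?thesis by (simp only: eq)
  qed
  then obtain c where c: "w N - ghost p N x = P ^ N * c" by (auto simp: dvd_def)
  define x' where "x' = x(N := c)"
  have "wtrunc (Suc N) x'" using x(1) unfolding wtrunc_def x'_def by auto
  moreover have "ghost p m x' = w m" if "m < Suc N" for m
  proof (cases "m < N")
    case True
    then have "ghost p m x' = ghost p m x" by (intro ghost_local) (auto simp: x'_def)
    then show ?thesis using x(2) True by simp
  next
    case False
    then have m: "m = N" using that by simp
    have s: "(\<Sum>i<N. P ^ i * x' i ^ (p ^ (N - i))) = (\<Sum>i<N. P ^ i * x i ^ (p ^ (N - i)))"
      by (intro sum.cong) (auto simp: x'_def)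
    have "x N = 0" using x(1) by (simp add: wtrunc_def)
    then have "ghost p N x' = ghost p N x + P ^ N * c"
      unfolding ghost_split[of N x'] ghost_split[of N x] s by (simp add: x'_def)
    then show ?thesis using c m by (simp add: algebra_simps)
  qed
  ultimately show ?case by blast
qed

lemma witt_THE:
  assumes "dw N w"
  shows "wtrunc N (THE z. wtrunc N z \<and> (\<forall>m<N. ghost p m z = w m))
     \<and> (\<forall>m<N. ghost p m (THE z. wtrunc N z \<and> (\<forall>m<N. ghost p m z = w m)) = w m)"
proof -
  have "\<exists>!z. wtrunc N z \<and> (\<forall>m<N. ghost p m z = w m)"
    using dwork_bwd[OF assms] ghost_inj by metis
  from theI'[OF this] show ?thesis .
qed

lemma witt_add_prop:
  fixes x y :: "nat \<Rightarrow> 'a"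
  shows   "wtrunc N (witt_add p N x y) \<and> (\<forall>m<N. ghost p m (witt_add p N x y) = ghost p m x + ghost p m y)"
proof -
  have "dw N (\<lambda>m. ghost p m x + ghost p m y)"
    unfolding dw_def
  proof (intro allI impI)
    fix m
    have e: "ghost p (Suc m) x + ghost p (Suc m) y - \<phi> (ghost p m x + ghost p m y)
      = (ghost p (Suc m) x - \<phi> (ghost p m x)) + (ghost p (Suc m) y - \<phi> (ghost p m y))"
      by (simp add: phi_add algebra_simps)
    show "P ^ Suc m dvd ghost p (Suc m) x + ghost p (Suc m) y - \<phi> (ghost p m x + ghost p m y)"
      unfolding e by (intro dvd_add dwork_fwd)
  qed
  from witt_THE[OF this] show ?thesis unfolding witt_add_def .
qed

lemma witt_sub_prop:
  fixes x y :: "nat \<Rightarrow> 'a"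
  shows   "wtrunc N (witt_sub p N x y) \<and> (\<forall>m<N. ghost p m (witt_sub p N x y) = ghost p m x - ghost p m y)"
proof -
  have "dw N (\<lambda>m. ghost p m x - ghost p m y)"
    unfolding dw_def
  proof (intro allI impI)
    fix m
    have e: "ghost p (Suc m) x - ghost p (Suc m) y - \<phi> (ghost p m x - ghost p m y)
      = (ghost p (Suc m) x - \<phi> (ghost p m x)) - (ghost p (Suc m) y - \<phi> (ghost p m y))"
      by (simp add: phi_diff algebra_simps)
    show "P ^ Suc m dvd ghost p (Suc m) x - ghost p (Suc m) y - \<phi> (ghost p m x - ghost p m y)"
      unfolding e by (intro dvd_diff dwork_fwd)
  qed
  from witt_THE[OF this] show ?thesis unfolding witt_sub_def .
qed

lemma s_phi_prop:
  "wtrunc N (s_phi p \<phi> N b) \<and> (\<forall>m<N. ghost p m (s_phi p \<phi> N b) = (\<phi> ^^ m) b)"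
proof -
  have "dw N (\<lambda>m. (\<phi> ^^ m) b)" unfolding dw_def by simp
  from witt_THE[OF this] show ?thesis unfolding s_phi_def .
qed

lemma zpow: "(0::'a) ^ (p ^ k) = 0"
  using p_pos by (intro zero_power) simp
lemma zpow2: "(0::'a) ^ (p * p ^ k) = 0"
  using zpow[of "Suc k"] by simp

lemma ghost_wV_0: "ghost p 0 (wV x) = 0" by (simp add: ghost_0 wV_def)

lemma ghost_wV_Suc:
  fixes x :: "nat \<Rightarrow> 'a"
  shows "ghost p (Suc m) (wV x) = P * ghost p m x"
  unfolding ghost_def sum.atMost_Suc_shift
  by (simp add: wV_def zpow zpow2 sum_distrib_left mult.assoc)

lemma ghost_wVn:
  fixes x :: "nat \<Rightarrow> 'a"
  shows "ghost p m ((wV ^^ s) x) = (if s \<le> m then P ^ s * ghost p (m - s) x else 0)"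
proof (induction s arbitrary: m)
  case 0 then show ?case by simp
next
  case (Suc s)
  show ?case
  proof (cases m)
    case 0 then show ?thesis by (simp add: ghost_wV_0)
  next
    case (Suc m') then show ?thesis using Suc.IH[of m'] by (simp add: ghost_wV_Suc)
  qed
qed

lemma wtrunc_wVn: "wtrunc n x \<Longrightarrow> wtrunc (n + s) ((wV ^^ s) x)"
proof (induction s)
  case 0 then show ?case by simp
next
  case (Suc s) then show ?case unfolding wtrunc_def by (simp add: wV_def)
qed

lemma ghost_teich:
  assumes "N > 0"
  shows "ghost p m (teich N (b::'a)) = b ^ (p ^ m)"
proof -
  have "ghost p m (teich N b) = (\<Sum>i\<le>m. if i = 0 then b ^ (p ^ m) else 0)"
    unfolding ghost_def by (intro sum.cong) (auto simp: teich_def assms zpow)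
  then show ?thesis by simp
qed

lemma wtrunc_teich: "wtrunc N (teich N b)" by (simp add: wtrunc_def teich_def)

lemma ghost_zero: "ghost p m (\<lambda>_. (0::'a)) = 0" by (simp add: ghost_def zpow)

lemma DeltaW_prop:
  fixes \<alpha> :: "nat \<Rightarrow> 'a"
  assumes "wtrunc n \<alpha>" "1 \<le> n"
  shows "wtrunc (n - 1) (DeltaW p \<phi> n \<alpha>) \<and> (\<forall>m. Suc m < n \<longrightarrow>
     P * ghost p m (DeltaW p \<phi> n \<alpha>) = ghost p (Suc m) \<alpha> - (\<phi> ^^ Suc m) (ghost p 0 \<alpha>))"
proof -
  define \<gamma> where "\<gamma> = witt_sub p n \<alpha> (s_phi p \<phi> n (\<alpha> 0))"
  have g1: "wtrunc n \<gamma>" and g2: "\<forall>m<n. ghost p m \<gamma> = ghost p m \<alpha> - (\<phi> ^^ m) (\<alpha> 0)"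
    using witt_sub_prop[of n \<alpha> "s_phi p \<phi> n (\<alpha> 0)"] s_phi_prop[of n "\<alpha> 0"]
    unfolding \<gamma>_def by auto
  have "\<gamma> 0 = 0" using g2 assms(2) by (auto simp: ghost_0)
  define \<beta> where "\<beta> = (\<lambda>i. \<gamma> (Suc i))"
  have wb: "wV \<beta> = \<gamma>"
  proof
    fix i show "wV \<beta> i = \<gamma> i" using \<open>\<gamma> 0 = 0\<close> by (cases i) (auto simp: wV_def \<beta>_def)
  qed
  have tb: "wtrunc (n - 1) \<beta>" using g1 unfolding wtrunc_def \<beta>_def by auto
  have D: "DeltaW p \<phi> n \<alpha> = \<beta>"
    unfolding DeltaW_def
  proof (rule the_equality)
    show "wtrunc (n - 1) \<beta> \<and> wV \<beta> = witt_sub p n \<alpha> (s_phi p \<phi> n (\<alpha> 0))"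
      using tb wb \<gamma>_def by simp
  next
    fix \<beta>' assume "wtrunc (n - 1) \<beta>' \<and> wV \<beta>' = witt_sub p n \<alpha> (s_phi p \<phi> n (\<alpha> 0))"
    then have "wV \<beta>' = wV \<beta>" using wb \<gamma>_def by simp
    then show "\<beta>' = \<beta>" by (metis (no_types) ext wV_def diff_Suc_1 nat.distinct(1))
  qed
  have "P * ghost p m \<beta> = ghost p (Suc m) \<alpha> - (\<phi> ^^ Suc m) (ghost p 0 \<alpha>)" if "Suc m < n" for m
    using g2 that by (simp add: ghost_wV_Suc[symmetric] wb ghost_0 del: funpow.simps)
  then show ?thesis using D tb by simp
qed

definition stp :: "(nat \<Rightarrow> 'a) \<Rightarrow> nat \<Rightarrow> 'a" where
  "stp w m = (SOME y. P * y = w (Suc m) - (\<phi> ^^ Suc m) (w 0))"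

lemma stp_eq: "P * y = w (Suc m) - (\<phi> ^^ Suc m) (w 0) \<Longrightarrow> stp w m = y"
  unfolding stp_def by (metis (mono_tags, lifting) someI_ex cancel1)

primrec Gs :: "(nat \<Rightarrow> 'a) \<Rightarrow> nat \<Rightarrow> nat \<Rightarrow> 'a" where
  "Gs w 0 = w"
| "Gs w (Suc k) = Gs (stp w) k"

lemma Gs_Suc: "Gs w (Suc k) = stp (Gs w k)"
  by (induction k arbitrary: w) auto

lemma delta_iter_ghost:
  fixes \<alpha> :: "nat \<Rightarrow> 'a"
  assumes "k < n" "wtrunc n \<alpha>" "\<forall>m<n. ghost p m \<alpha> = w m"
  shows "wtrunc (n - k) (delta_iter p \<phi> k n \<alpha>) \<and> (\<forall>m<n-k. ghost p m (delta_iter p \<phi> k n \<alpha>) = Gs w k m)"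
  using assms
proof (induction k arbitrary: n \<alpha> w)
  case 0 then show ?case by simp
next
  case (Suc k)
  define \<beta> where "\<beta> = DeltaW p \<phi> n \<alpha>"
  have D: "wtrunc (n - 1) \<beta>" "\<And>m. Suc m < n \<Longrightarrow>
     P * ghost p m \<beta> = ghost p (Suc m) \<alpha> - (\<phi> ^^ Suc m) (ghost p 0 \<alpha>)"
    using DeltaW_prop[of n \<alpha>] Suc.prems unfolding \<beta>_def by auto
  have "ghost p m \<beta> = stp w m" if "m < n - 1" for m
  proof -
    have "P * ghost p m \<beta> = w (Suc m) - (\<phi> ^^ Suc m) (w 0)"
      using D(2)[of m] that Suc.prems by auto
    then show ?thesis using stp_eq by metis
  qed
  then have "wtrunc (n - 1 - k) (delta_iter p \<phi> k (n - 1) \<beta>) \<and>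
     (\<forall>m<n - 1 - k. ghost p m (delta_iter p \<phi> k (n - 1) \<beta>) = Gs (stp w) k m)"
    using Suc.IH[of "n - 1" \<beta> "stp w"] Suc.prems D(1) by auto
  then show ?case by (simp add: \<beta>_def)
qed

definition GA :: "'a \<Rightarrow> nat \<Rightarrow> nat \<Rightarrow> 'a" where
  "GA a = Gs (\<lambda>m. a ^ (p ^ m))"

lemma GA_0: "GA a 0 m = a ^ (p ^ m)" by (simp add: GA_def)

lemma Delta_G: "Delta p \<phi> s a = GA a s 0"
proof -
  have "\<forall>m<s+1-s. ghost p m (delta_iter p \<phi> s (s+1) (teich (s+1) a)) = GA a s m"
    using delta_iter_ghost[of s "s+1" "teich (s+1) a" "\<lambda>m. a ^ (p ^ m)"]
    by (simp add: wtrunc_teich ghost_teich GA_def)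
  then show ?thesis unfolding Delta_def by (simp add: ghost_0)
qed

lemma G_rel: "P * GA a (Suc k) m = GA a k (Suc m) - (\<phi> ^^ Suc m) (GA a k 0)"
proof -
  define N where "N = k + m + 2"
  define \<alpha> where "\<alpha> = delta_iter p \<phi> k N (teich N a)"
  have A: "wtrunc (m + 2) \<alpha>" "\<forall>j<m+2. ghost p j \<alpha> = GA a k j"
    using delta_iter_ghost[of k N "teich N a" "\<lambda>m. a ^ (p ^ m)"]
    by (auto simp: wtrunc_teich ghost_teich GA_def N_def \<alpha>_def)
  have "P * ghost p m (DeltaW p \<phi> (m+2) \<alpha>) = GA a k (Suc m) - (\<phi> ^^ Suc m) (GA a k 0)"
    using DeltaW_prop[of "m+2" \<alpha>] A by (simp del: funpow.simps)
  then have "stp (GA a k) m = ghost p m (DeltaW p \<phi> (m+2) \<alpha>)" by (rule stp_eq)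
  moreover have "GA a (Suc k) = stp (GA a k)" by (simp only: GA_def Gs_Suc)
  ultimately show ?thesis using \<open>P * ghost p m (DeltaW p \<phi> (m+2) \<alpha>) = _\<close>
    by (simp del: funpow.simps)
qed

end

context frob begin
lemma G_sum: "GA a k m = (\<Sum>j\<le>m. P ^ j * (\<phi> ^^ (m - j)) (GA a (k + j) 0))"
proof (induction m arbitrary: k)
  case 0 then show ?case by simp
next
  case (Suc m)
  have "GA a k (Suc m) = (\<phi> ^^ Suc m) (GA a k 0) + P * GA a (Suc k) m"
    using G_rel[of a k m] by (simp add: algebra_simps del: funpow.simps)
  also have "\<dots> = (\<phi> ^^ Suc m) (GA a k 0) + (\<Sum>j\<le>m. P ^ Suc j * (\<phi> ^^ (m - j)) (GA a (Suc k + j) 0))"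
    unfolding Suc.IH[of "Suc k"] by (simp add: sum_distrib_left mult.assoc del: funpow.simps)
  also have "\<dots> = (\<Sum>j\<le>Suc m. P ^ j * (\<phi> ^^ (Suc m - j)) (GA a (k + j) 0))"
    unfolding sum.atMost_Suc_shift by (simp del: funpow.simps)
  finally show ?case .
qed

lemma ghost_Delta: "a ^ (p ^ m) = (\<Sum>s\<le>m. P ^ s * (\<phi> ^^ (m - s)) (Delta p \<phi> s a))"
  using G_sum[of a 0 m] by (simp add: GA_0 Delta_G del: funpow.simps)

lemma Delta1: "P * Delta p \<phi> 1 b = b ^ p - \<phi> b"
  using G_rel[of b 0 0] by (simp add: Delta_G GA_0)

lemma PDelta: "P ^ (Suc n) * Delta p \<phi> (Suc n) a = a ^ (p ^ Suc n) - \<phi> (a ^ (p ^ n))"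
proof -
  have "a ^ (p ^ Suc n) = (\<Sum>s\<le>n. P ^ s * (\<phi> ^^ (Suc n - s)) (Delta p \<phi> s a)) + P ^ (Suc n) * Delta p \<phi> (Suc n) a"
    using ghost_Delta[of a "Suc n"] by (simp del: funpow.simps)
  moreover have "\<phi> (a ^ (p ^ n)) = (\<Sum>s\<le>n. P ^ s * (\<phi> ^^ (Suc n - s)) (Delta p \<phi> s a))"
  proof -
    have "\<phi> (a ^ (p ^ n)) = (\<Sum>s\<le>n. P ^ s * \<phi> ((\<phi> ^^ (n - s)) (Delta p \<phi> s a)))"
      by (subst ghost_Delta) (simp add: phi_sum phi_mult phi_Ppow del: funpow.simps)
    also have "\<dots> = (\<Sum>s\<le>n. P ^ s * (\<phi> ^^ (Suc n - s)) (Delta p \<phi> s a))"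
      by (intro sum.cong) (auto simp: Suc_diff_le)
    finally show ?thesis .
  qed
  ultimately show ?thesis by simp
qed

lemma part3: "1 \<le> n \<Longrightarrow> P ^ (n - 1) * Delta p \<phi> n a = Delta p \<phi> 1 (a ^ (p ^ (n - 1)))"
proof -
  assume "1 \<le> n"
  then obtain n' where n: "n = Suc n'" by (cases n) auto
  have "P * (P ^ n' * Delta p \<phi> (Suc n') a) = P * Delta p \<phi> 1 (a ^ (p ^ n'))"
    unfolding Delta1 using PDelta[of n' a]
    by (simp add: power_mult[symmetric] mult.commute mult.left_commute)
  then show ?thesis using n cancel1 by simp
qed

lemma pow_expand: "\<exists>c. (U - t) ^ m = U ^ m - of_nat m * t * U ^ (m - 1) + t ^ 2 * (c::'a)"
proof (induction m)
  case 0 then show ?case by (intro exI[of _ 0]) simp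
next
  case (Suc m)
  then obtain c where c: "(U - t) ^ m = U ^ m - of_nat m * t * U ^ (m - 1) + t ^ 2 * c" by blast
  show ?case
  proof (cases m)
    case 0 then show ?thesis by (intro exI[of _ 0]) simp
  next
    case (Suc m')
    have "(U - t) ^ Suc m = (U - t) * (U ^ m - of_nat m * t * U ^ m' + t ^ 2 * c)"
      using c Suc by simp
    also have "\<dots> = U ^ Suc m - of_nat (Suc m) * t * U ^ (Suc m - 1) + t ^ 2 * (of_nat m * U ^ m' + (U - t) * c)"
      using Suc by (simp add: algebra_simps power2_eq_square)
    finally show ?thesis by blast
  qed
qed

lemma S_expand:
  fixes U t :: 'a
  shows "\<exists>C. (\<Sum>i<n. (U - t) ^ (n - Suc i) * U ^ i) =
     of_nat n * U ^ (n - 1) - of_nat (\<Sum>i<n. n - Suc i) * t * U ^ (n - 2) + t ^ 2 * C"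
proof -
  have "\<forall>i. \<exists>c. (U - t) ^ (n - Suc i) = U ^ (n - Suc i) - of_nat (n - Suc i) * t * U ^ (n - Suc i - 1) + t ^ 2 * c"
    using pow_expand by blast
  then obtain c where c: "\<And>i. (U - t) ^ (n - Suc i) = U ^ (n - Suc i) - of_nat (n - Suc i) * t * U ^ (n - Suc i - 1) + t ^ 2 * c i"
    by metis
  have tm: "(U - t) ^ (n - Suc i) * U ^ i = U ^ (n - 1) - of_nat (n - Suc i) * t * U ^ (n - 2) + t ^ 2 * (c i * U ^ i)"
    if "i < n" for i
  proof (cases "n - Suc i = 0")
    case True
    then have "n - 1 = i" using that by simp
    then show ?thesis unfolding c using True by (simp add: ring_distribs)
  next
    case False
    have e1: "U ^ (n - Suc i) * U ^ i = U ^ (n - 1)"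
      using that by (simp add: power_add[symmetric])
    have e2: "U ^ (n - Suc i - 1) * U ^ i = U ^ (n - 2)"
      using that False by (simp add: power_add[symmetric])
    have "(U ^ (n - Suc i) - of_nat (n - Suc i) * t * U ^ (n - Suc i - 1) + t ^ 2 * c i) * U ^ i
       = U ^ (n - Suc i) * U ^ i - of_nat (n - Suc i) * t * (U ^ (n - Suc i - 1) * U ^ i) + t ^ 2 * (c i * U ^ i)"
      by (simp only: ring_distribs mult.assoc)
    then show ?thesis unfolding c e1 e2 .
  qed
  have "(\<Sum>i<n. (U - t) ^ (n - Suc i) * U ^ i) =
     (\<Sum>i<n. U ^ (n - 1) - of_nat (n - Suc i) * t * U ^ (n - 2) + t ^ 2 * (c i * U ^ i))"
    using tm by (intro sum.cong) auto
  also have "\<dots> = of_nat n * U ^ (n - 1) - of_nat (\<Sum>i<n. n - Suc i) * t * U ^ (n - 2) + t ^ 2 * (\<Sum>i<n. c i * U ^ i)"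
    by (simp only: sum.distrib sum_subtractf sum_constant card_lessThan of_nat_sum sum_distrib_right sum_distrib_left)
  finally show ?thesis by blast
qed

lemma gauss2: "2 * (\<Sum>i<n. n - Suc i) = n * (n - 1)"
proof (induction n)
  case 0 then show ?case by simp
next
  case (Suc n)
  have "(\<Sum>i<Suc n. Suc n - Suc i) = (\<Sum>i<n. n - Suc i) + n"
  proof -
    have "(\<Sum>i<Suc n. Suc n - Suc i) = (\<Sum>i<n. n - i)" by (simp add: sum.lessThan_Suc)
    also have "\<dots> = (\<Sum>i<n. (n - Suc i) + 1)" by (intro sum.cong) auto
    also have "\<dots> = (\<Sum>i<n. n - Suc i) + n" by (simp add: sum_Suc)
    finally show ?thesis .
  qed
  then show ?case using Suc by (cases n) (auto simp: algebra_simps)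
qed

lemma UV: "P ^ (Suc k) * Delta p \<phi> (Suc k) a = a ^ (p ^ Suc k) - \<phi> a ^ (p ^ k)"
  using PDelta[of k a] by (simp add: phi_pow)

lemma step_eq: "P * Delta p \<phi> (Suc (Suc k)) a =
   Delta p \<phi> (Suc k) a * (\<Sum>i<p. (\<phi> a ^ (p ^ k)) ^ (p - Suc i) * (a ^ (p ^ Suc k)) ^ i)"
proof -
  define U where "U = a ^ (p ^ Suc k)"
  define V where "V = \<phi> a ^ (p ^ k)"
  define S where "S = (\<Sum>i<p. V ^ (p - Suc i) * U ^ i)"
  have "P ^ Suc k * (P * Delta p \<phi> (Suc (Suc k)) a) = P ^ Suc (Suc k) * Delta p \<phi> (Suc (Suc k)) a"
    by (simp add: mult.assoc)
  also have "\<dots> = U ^ p - V ^ p" unfolding UV U_def V_def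
    by (simp add: power_mult[symmetric] mult.commute)
  also have "\<dots> = (U - V) * S" unfolding S_def by (rule power_diff_sumr2)
  also have "\<dots> = P ^ Suc k * (Delta p \<phi> (Suc k) a * S)" unfolding U_def V_def UV[symmetric]
    by (simp add: mult.assoc)
  finally show ?thesis using cancel unfolding S_def U_def V_def by blast
qed

lemma step_mod:
  assumes "1 \<le> k \<or> odd p"
  shows "\<exists>c. Delta p \<phi> (Suc (Suc k)) a = Delta p \<phi> (Suc k) a * a ^ (p ^ Suc k * (p - 1)) + P * c"
proof -
  define U where "U = a ^ (p ^ Suc k)"
  define V where "V = \<phi> a ^ (p ^ k)"
  define D1 where "D1 = Delta p \<phi> (Suc k) a"
  define t where "t = U - V"
  define \<sigma> where "\<sigma> = (\<Sum>i<p. p - Suc i)"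
  have t: "t = P ^ Suc k * D1" unfolding t_def U_def V_def D1_def UV ..
  have V: "V = U - t" unfolding t_def by simp
  obtain C where C: "(\<Sum>i<p. (U - t) ^ (p - Suc i) * U ^ i) =
     P * U ^ (p - 1) - of_nat \<sigma> * t * U ^ (p - 2) + t ^ 2 * C"
    using S_expand[where n=p and U=U and t=t] unfolding \<sigma>_def by blast
  have Pt: "P dvd t" unfolding t by simp
  have d1: "P ^ 2 dvd t ^ 2" using Pt by (simp add: power2_eq_square mult_dvd_mono)
  have d2: "P ^ 2 dvd of_nat \<sigma> * t * U ^ (p - 2)"
  proof (cases "1 \<le> k")
    case True
    have "P ^ 2 dvd P ^ Suc k" using True by (intro le_imp_power_dvd) simp
    then have "P ^ 2 dvd t" unfolding t by (rule dvd_mult2)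
    then show ?thesis by (metis dvd_mult dvd_mult2)
  next
    case False
    then have "odd p" using assms by simp
    then obtain q where q: "p - 1 = 2 * q" by (metis odd_two_times_div_two_nat dvd_mult_div_cancel
        even_diff_nat odd_one)
    have "2 * \<sigma> = 2 * (p * q)" unfolding \<sigma>_def gauss2 q by simp
    then have "\<sigma> = p * q" by simp
    then have "P dvd of_nat \<sigma>" by simp
    then have "P * P dvd of_nat \<sigma> * t" using Pt by (rule mult_dvd_mono)
    then show ?thesis by (simp add: power2_eq_square)
  qed
  have "P ^ 2 dvd (- (of_nat \<sigma> * t * U ^ (p - 2)) + t ^ 2 * C)"
    using d1 d2 by (intro dvd_add dvd_mult2) auto
  then obtain D where D: "- (of_nat \<sigma> * t * U ^ (p - 2)) + t ^ 2 * C = P ^ 2 * D" by (auto simp: dvd_def)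
  have "P * Delta p \<phi> (Suc (Suc k)) a = D1 * (P * U ^ (p - 1) + P ^ 2 * D)"
    using step_eq[of k a] unfolding D1_def[symmetric] U_def[symmetric] V_def[symmetric]
    unfolding V C D[symmetric] by (simp add: algebra_simps)
  also have "\<dots> = P * (D1 * U ^ (p - 1) + P * (D1 * D))" by (simp add: algebra_simps power2_eq_square)
  finally have "Delta p \<phi> (Suc (Suc k)) a = D1 * U ^ (p - 1) + P * (D1 * D)" by (rule cancel1)
  then have "Delta p \<phi> (Suc (Suc k)) a = D1 * a ^ (p ^ Suc k * (p - 1)) + P * (D1 * D)"
    unfolding U_def power_mult .
  then show ?thesis unfolding D1_def by blast
qed

lemma step_p2:
  assumes "p = 2"
  shows "\<exists>c. Delta p \<phi> 2 a = Delta p \<phi> 1 a * a ^ 2 + Delta p \<phi> 1 a ^ 2 + P * c"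
proof -
  define D1 where "D1 = Delta p \<phi> 1 a"
  have e1: "P * Delta p \<phi> 2 a = D1 * (\<phi> a + a ^ 2)"
    using step_eq[of 0 a] assms unfolding D1_def by (simp add: numeral_2_eq_2)
  have e2: "\<phi> a = a ^ 2 - P * D1" using UV[of 0 a] assms unfolding D1_def by simp
  have "P * Delta p \<phi> 2 a = P * (D1 * a ^ 2 + D1 ^ 2 + P * (- (D1 ^ 2)))"
    unfolding e1 e2 using assms by (simp add: algebra_simps power2_eq_square)
  then show ?thesis unfolding D1_def using cancel1 by blast
qed

lemma exps:
  assumes "2 \<le> p"
  shows "p ^ Suc (Suc k) - p + p ^ Suc (Suc k) * (p - 1) = p ^ Suc (Suc (Suc k)) - p"
    and "p ^ Suc (Suc k) - 2 * p + p ^ Suc (Suc k) * (p - 1) = p ^ Suc (Suc (Suc k)) - 2 * p"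
proof -
  define Q where "Q = p ^ Suc (Suc k)"
  have "1 \<le> p ^ k" using assms by simp
  then have h1: "p * p \<le> p * p * p ^ k" using mult_le_mono2[of 1 "p ^ k" "p * p"] by simp
  have h2: "2 * p \<le> p * p" using assms by simp
  have Qe: "Q = p * p * p ^ k" unfolding Q_def by simp
  have Q: "2 * p \<le> Q" using h1 h2 Qe by linarith
  have QQ: "Q * (p - 1) + Q = Q * p" using assms by (cases p) auto
  have R: "p ^ Suc (Suc (Suc k)) = Q * p" unfolding Q_def by (simp add: mult.commute)
  show "p ^ Suc (Suc k) - p + p ^ Suc (Suc k) * (p - 1) = p ^ Suc (Suc (Suc k)) - p"
    unfolding R Q_def[symmetric] using Q QQ by linarith
  show "p ^ Suc (Suc k) - 2 * p + p ^ Suc (Suc k) * (p - 1) = p ^ Suc (Suc (Suc k)) - 2 * p"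
    unfolding R Q_def[symmetric] using Q QQ by linarith
qed

lemma part4:
  "(odd p \<longrightarrow> (\<exists>c. Delta p \<phi> (Suc (Suc k)) a = a ^ (p ^ Suc (Suc k) - p) * Delta p \<phi> 1 a + P * c))
   \<and> (p = 2 \<longrightarrow> (\<exists>c. Delta p \<phi> (Suc (Suc k)) a = a ^ (p ^ Suc (Suc k) - p) * Delta p \<phi> 1 a
          + a ^ (p ^ Suc (Suc k) - 2 * p) * Delta p \<phi> 1 a ^ p + P * c))"
proof (induction k)
  case 0
  have A: "odd p \<longrightarrow> (\<exists>c. Delta p \<phi> (Suc (Suc 0)) a = a ^ (p ^ Suc (Suc 0) - p) * Delta p \<phi> 1 a + P * c)"
  proof
    assume "odd p"
    then obtain c where "Delta p \<phi> (Suc (Suc 0)) a = Delta p \<phi> (Suc 0) a * a ^ (p ^ Suc 0 * (p - 1)) + P * c"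
      using step_mod[of 0 a] by auto
    moreover have "p ^ Suc 0 * (p - 1) = p ^ Suc (Suc 0) - p" by (simp add: diff_mult_distrib2)
    ultimately show "\<exists>c. Delta p \<phi> (Suc (Suc 0)) a = a ^ (p ^ Suc (Suc 0) - p) * Delta p \<phi> 1 a + P * c"
      by (auto simp: mult.commute)
  qed
  have B: "p = 2 \<longrightarrow> (\<exists>c. Delta p \<phi> (Suc (Suc 0)) a = a ^ (p ^ Suc (Suc 0) - p) * Delta p \<phi> 1 a
          + a ^ (p ^ Suc (Suc 0) - 2 * p) * Delta p \<phi> 1 a ^ p + P * c)"
  proof
    assume p2: "p = 2"
    then obtain c where "Delta p \<phi> 2 a = Delta p \<phi> 1 a * a ^ 2 + Delta p \<phi> 1 a ^ 2 + P * c"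
      using step_p2 by blast
    then show "\<exists>c. Delta p \<phi> (Suc (Suc 0)) a = a ^ (p ^ Suc (Suc 0) - p) * Delta p \<phi> 1 a
          + a ^ (p ^ Suc (Suc 0) - 2 * p) * Delta p \<phi> 1 a ^ p + P * c"
      using p2 by (auto simp: numeral_2_eq_2 mult.commute)
  qed
  from A B show ?case by blast
next
  case (Suc k)
  have E: "\<exists>c. Delta p \<phi> (Suc (Suc (Suc k))) a = Delta p \<phi> (Suc (Suc k)) a * a ^ (p ^ Suc (Suc k) * (p - 1)) + P * c"
    using step_mod[of "Suc k" a] by simp
  then obtain c where c: "Delta p \<phi> (Suc (Suc (Suc k))) a = Delta p \<phi> (Suc (Suc k)) a * a ^ (p ^ Suc (Suc k) * (p - 1)) + P * c"
    by blast
  define E where "E = p ^ Suc (Suc k) * (p - 1)"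
  have A: "odd p \<longrightarrow> (\<exists>c. Delta p \<phi> (Suc (Suc (Suc k))) a = a ^ (p ^ Suc (Suc (Suc k)) - p) * Delta p \<phi> 1 a + P * c)"
  proof
    assume "odd p"
    then obtain c' where c': "Delta p \<phi> (Suc (Suc k)) a = a ^ (p ^ Suc (Suc k) - p) * Delta p \<phi> 1 a + P * c'"
      using Suc.IH by blast
    have e1: "a ^ (p ^ Suc (Suc k) - p) * a ^ E = a ^ (p ^ Suc (Suc (Suc k)) - p)"
      unfolding E_def power_add[symmetric] exps(1)[OF p_ge2] ..
    have "Delta p \<phi> (Suc (Suc (Suc k))) a = (a ^ (p ^ Suc (Suc k) - p) * a ^ E) * Delta p \<phi> 1 a + P * (c' * a ^ E + c)"
      unfolding c c' E_def[symmetric] by (simp add: algebra_simps)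
    then have "Delta p \<phi> (Suc (Suc (Suc k))) a = a ^ (p ^ Suc (Suc (Suc k)) - p) * Delta p \<phi> 1 a + P * (c' * a ^ E + c)"
      unfolding e1 .
    then show "\<exists>c. Delta p \<phi> (Suc (Suc (Suc k))) a = a ^ (p ^ Suc (Suc (Suc k)) - p) * Delta p \<phi> 1 a + P * c" ..
  qed
  have B: "p = 2 \<longrightarrow> (\<exists>c. Delta p \<phi> (Suc (Suc (Suc k))) a = a ^ (p ^ Suc (Suc (Suc k)) - p) * Delta p \<phi> 1 a
          + a ^ (p ^ Suc (Suc (Suc k)) - 2 * p) * Delta p \<phi> 1 a ^ p + P * c)"
  proof
    assume "p = 2"
    then obtain c' where c': "Delta p \<phi> (Suc (Suc k)) a = a ^ (p ^ Suc (Suc k) - p) * Delta p \<phi> 1 a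
          + a ^ (p ^ Suc (Suc k) - 2 * p) * Delta p \<phi> 1 a ^ p + P * c'"
      using Suc.IH by blast
    have e1: "a ^ (p ^ Suc (Suc k) - p) * a ^ E = a ^ (p ^ Suc (Suc (Suc k)) - p)"
      unfolding E_def power_add[symmetric] exps(1)[OF p_ge2] ..
    have e2: "a ^ (p ^ Suc (Suc k) - 2 * p) * a ^ E = a ^ (p ^ Suc (Suc (Suc k)) - 2 * p)"
      unfolding E_def power_add[symmetric] exps(2)[OF p_ge2] ..
    have "Delta p \<phi> (Suc (Suc (Suc k))) a = (a ^ (p ^ Suc (Suc k) - p) * a ^ E) * Delta p \<phi> 1 a
          + (a ^ (p ^ Suc (Suc k) - 2 * p) * a ^ E) * Delta p \<phi> 1 a ^ p + P * (c' * a ^ E + c)"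
      unfolding c c' E_def[symmetric] by (simp add: algebra_simps)
    then show "\<exists>c. Delta p \<phi> (Suc (Suc (Suc k))) a = a ^ (p ^ Suc (Suc (Suc k)) - p) * Delta p \<phi> 1 a
          + a ^ (p ^ Suc (Suc (Suc k)) - 2 * p) * Delta p \<phi> 1 a ^ p + P * c"
      unfolding e1 e2 ..
  qed
  from A B show ?case by blast
qed

lemma witt_sum_prop:
  fixes xs :: "(nat \<Rightarrow> 'a) list"
  shows "wtrunc N (witt_sum p N xs) \<and> (\<forall>m<N. ghost p m (witt_sum p N xs) = sum_list (map (ghost p m) xs))"
proof (induction xs)
  case Nil then show ?case by (simp add: witt_sum_def wtrunc_def ghost_zero)
next
  case (Cons x xs)
  have "witt_sum p N (x # xs) = witt_add p N x (witt_sum p N xs)" by (simp add: witt_sum_def)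
  then show ?case using witt_add_prop[of N x "witt_sum p N xs"] Cons by simp
qed

lemma part1:
  "teich (n + 1) a =
           witt_sum p (n + 1)
             (map (\<lambda>s. (wV ^^ s) (s_phi p \<phi> (n + 1 - s) (Delta p \<phi> s a))) [0..<n]
              @ [(wV ^^ n) (teich 1 (Delta p \<phi> n a))])"
  (is "_ = witt_sum p (n + 1) (map ?f [0..<n] @ [?g])")
proof (rule ghost_inj)
  show "wtrunc (n + 1) (teich (n + 1) a)" by (rule wtrunc_teich)
  show "wtrunc (n + 1) (witt_sum p (n + 1) (map ?f [0..<n] @ [?g]))" using witt_sum_prop by blast
  show "\<forall>m<n + 1. ghost p m (teich (n + 1) a) = ghost p m (witt_sum p (n + 1) (map ?f [0..<n] @ [?g]))"
  proof (intro allI impI)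
    fix m assume m: "m < n + 1"
    define h where "h = (\<lambda>s. P ^ s * (\<phi> ^^ (m - s)) (Delta p \<phi> s a))"
    have "ghost p m (witt_sum p (n + 1) (map ?f [0..<n] @ [?g])) = sum_list (map (ghost p m) (map ?f [0..<n] @ [?g]))"
      using witt_sum_prop m by blast
    also have "\<dots> = (\<Sum>s<n. ghost p m (?f s)) + ghost p m ?g"
      by (simp add: sum_set_upt_conv_sum_list_nat[symmetric] atLeast0LessThan)
    also have "(\<Sum>s<n. ghost p m (?f s)) = (\<Sum>s<n. if s \<le> m then h s else 0)"
    proof (intro sum.cong refl)
      fix s assume s: "s \<in> {..<n}"
      show "ghost p m (?f s) = (if s \<le> m then h s else 0)"
        using s m s_phi_prop[of "n + 1 - s" "Delta p \<phi> s a"]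
        by (auto simp: ghost_wVn h_def)
    qed
    also have "ghost p m ?g = (if n \<le> m then P ^ n * Delta p \<phi> n a ^ (p ^ (m - n)) else 0)"
      by (simp add: ghost_wVn ghost_teich)
    finally have G: "ghost p m (witt_sum p (n + 1) (map ?f [0..<n] @ [?g])) =
       (\<Sum>s<n. if s \<le> m then h s else 0) + (if n \<le> m then P ^ n * Delta p \<phi> n a ^ (p ^ (m - n)) else 0)" .
    have T: "ghost p m (teich (n + 1) a) = (\<Sum>s\<le>m. h s)"
      unfolding h_def by (simp add: ghost_teich ghost_Delta[symmetric] del: funpow.simps)
    show "ghost p m (teich (n + 1) a) = ghost p m (witt_sum p (n + 1) (map ?f [0..<n] @ [?g]))"
    proof (cases "m < n")
      case True
      have "(\<Sum>s<n. if s \<le> m then h s else 0) = (\<Sum>s\<in>{..<n} \<inter> {s. s \<le> m}. h s)"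
        by (simp add: sum.inter_restrict)
      also have "{..<n} \<inter> {s. s \<le> m} = {..m}" using True by auto
      finally show ?thesis unfolding G T using True by simp
    next
      case False
      then have mn: "m = n" using m by simp
      have "(\<Sum>s<n. if s \<le> m then h s else 0) = (\<Sum>s<n. h s)" using mn by (intro sum.cong) auto
      moreover have "(\<Sum>s\<le>m. h s) = (\<Sum>s<n. h s) + h n" using mn
        by (simp add: lessThan_Suc_atMost[symmetric])
      moreover have "h n = P ^ n * Delta p \<phi> n a" using mn by (simp add: h_def)
      ultimately show ?thesis unfolding G T using mn by simp
    qed
  qed
qed

end

theorem theorem3p6:
  fixes p :: nat and \<phi> :: "'a::comm_ring_1 \<Rightarrow> 'a" and a :: 'a and n :: nat
  assumes "prime p"
    and torsion_free: "\<forall>x::'a. of_nat p * x = 0 \<longrightarrow> x = 0"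
    and phi_add: "\<forall>x y. \<phi> (x + y) = \<phi> x + \<phi> y"
    and phi_mult: "\<forall>x y. \<phi> (x * y) = \<phi> x * \<phi> y"
    and phi_one: "\<phi> 1 = 1"
    and frob_lift: "\<forall>x. \<exists>y. \<phi> x = x ^ p + of_nat p * y"
    and "n \<ge> 1"
  shows "teich (n + 1) a =
           witt_sum p (n + 1)
             (map (\<lambda>s. (wV ^^ s) (s_phi p \<phi> (n + 1 - s) (Delta p \<phi> s a))) [0..<n]
              @ [(wV ^^ n) (teich 1 (Delta p \<phi> n a))])
    \<and> a ^ (p ^ n) = (\<Sum>s\<le>n. of_nat p ^ s * (\<phi> ^^ (n - s)) (Delta p \<phi> s a))
    \<and> of_nat p ^ (n - 1) * Delta p \<phi> n a = Delta p \<phi> 1 (a ^ (p ^ (n - 1)))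
    \<and> (n \<ge> 2 \<and> p = 2 \<longrightarrow>
           (\<exists>c. Delta p \<phi> n a = a ^ (p ^ n - p) * Delta p \<phi> 1 a
                 + a ^ (p ^ n - 2 * p) * Delta p \<phi> 1 a ^ p + of_nat p * c))
    \<and> (n \<ge> 2 \<and> odd p \<longrightarrow>
           (\<exists>c. Delta p \<phi> n a = a ^ (p ^ n - p) * Delta p \<phi> 1 a + of_nat p * c))"
proof -
  interpret frob p \<phi>
    using assms by unfold_locales auto
  have c4: "n \<ge> 2 \<and> p = 2 \<longrightarrow>
           (\<exists>c. Delta p \<phi> n a = a ^ (p ^ n - p) * Delta p \<phi> 1 a
                 + a ^ (p ^ n - 2 * p) * Delta p \<phi> 1 a ^ p + of_nat p * c)"
  proof
    assume h: "n \<ge> 2 \<and> p = 2"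
    then obtain k where "n = Suc (Suc k)" by (metis add_2_eq_Suc le_Suc_ex)
    then show "\<exists>c. Delta p \<phi> n a = a ^ (p ^ n - p) * Delta p \<phi> 1 a
                 + a ^ (p ^ n - 2 * p) * Delta p \<phi> 1 a ^ p + of_nat p * c"
      using part4[of k a] h by blast
  qed
  have c5: "n \<ge> 2 \<and> odd p \<longrightarrow>
           (\<exists>c. Delta p \<phi> n a = a ^ (p ^ n - p) * Delta p \<phi> 1 a + of_nat p * c)"
  proof
    assume h: "n \<ge> 2 \<and> odd p"
    then obtain k where "n = Suc (Suc k)" by (metis add_2_eq_Suc le_Suc_ex)
    then show "\<exists>c. Delta p \<phi> n a = a ^ (p ^ n - p) * Delta p \<phi> 1 a + of_nat p * c"
      using part4[of k a] h by blast
  qed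
  show ?thesis using part1 ghost_Delta part3 assms(7) c4 c5 by blast
qed

end
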